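(* Let $\mathbf{u}$ be the functional $\langle\mathbf{u},p\rangle=\int_{-1}^1p(x)(1-x^2)^{1/2}dx$, with monic orthogonal polynomials $(U_n)$ (monic Chebyshev polynomials of the second kind, $xU_n=U_{n+1}+\frac14U_{n-1}$, $U_{-1}=0$, $U_0=1$). Then its inverse $\mathbf{u}^{-1}$ is given by $$\langle\mathbf{u}^{-1},p\rangle=-\frac{1}{\pi^2}\int_{-1}^1\frac{p(x)-p(0)-p'(0)x}{x^2}(1-x^2)^{1/2}dx+\frac{2}{\pi}p(0),$$ it is quasi-definite, and its monic orthogonal polynomials are $U^-_0=1$, $U^-_1=x$, $U^-_n=U_n+\alpha_nU_{n-2}$ for $n\ge2$ with $\alpha_n=\frac{n+2}{4n}$ if $n$ is even and $\alpha_n=\frac14$ if $n$ is odd. They satisfy $xU^-_n=U^-_{n+1}+a^-_nU^-_{n-1}$ with $a^-_1=-\frac14$, $a^-_n=\frac{n+2}{4n}$ for even $n\ge2$, and $a^-_n=\frac{n-1}{4(n+1)}$ for odd $n\ge3$. Moreover $\mathcal{S}_{\mathbf{u}^{-1}}(z)=\frac{2}{\pi z}-\frac{1}{\pi^2z^2}\mathcal{S}_{\mathbf{u}}(z)$.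
   Context: Moments $\mathbf{u}_n=\langle\mathbf{u},x^n\rangle$. The inverse $\mathbf{u}^{-1}$ is the functional with moments $(\mathbf{u}^{-1})_0=1/\mathbf{u}_0$, $(\mathbf{u}^{-1})_n=-\frac{1}{\mathbf{u}_0}\sum_{k=0}^{n-1}\mathbf{u}_{n-k}(\mathbf{u}^{-1})_k$ ($n\ge1$). Quasi-definite: all leading principal submatrices of the Hankel moment matrix nonsingular. Stieltjes function: formal series $\mathcal{S}_{\mathbf{u}}(z)=\sum_{n\ge0}\mathbf{u}_nz^{-n-1}$. *)

theory Defs
  imports "HOL-Analysis.Analysis" "HOL-Computational_Algebra.Polynomial"
    "HOL-Computational_Algebra.Formal_Power_Series" "Jordan_Normal_Form.Determinant"
begin

text \<open>A linear functional on real polynomials is identified with its moment sequence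
  m n = <u, x^n>; it acts on a polynomial by linearity.\<close>
definition fpair :: "(nat \<Rightarrow> real) \<Rightarrow> real poly \<Rightarrow> real" where
  "fpair m p = (\<Sum>k\<le>degree p. coeff p k * m k)"

definition cheb_mom :: "nat \<Rightarrow> real" where
  "cheb_mom n = integral {-1..1} (\<lambda>x. x ^ n * sqrt (1 - x\<^sup>2))"

fun inv_mom :: "(nat \<Rightarrow> real) \<Rightarrow> nat \<Rightarrow> real" where
  "inv_mom m 0 = 1 / m 0"
| "inv_mom m (Suc n) = - (1 / m 0) * (\<Sum>k\<le>n. m (Suc n - k) * inv_mom m k)"

definition quasi_definite :: "(nat \<Rightarrow> real) \<Rightarrow> bool" where
  "quasi_definite m \<longleftrightarrow>
     (\<forall>n. Determinant.det (Matrix.mat (Suc n) (Suc n) (\<lambda>(i, j). m (i + j))) \<noteq> 0)"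

definition is_MOPS :: "(nat \<Rightarrow> real) \<Rightarrow> (nat \<Rightarrow> real poly) \<Rightarrow> bool" where
  "is_MOPS m P \<longleftrightarrow>
     (\<forall>n. degree (P n) = n \<and> lead_coeff (P n) = 1) \<and>
     (\<forall>n k. n \<noteq> k \<longrightarrow> fpair m (P n * P k) = 0) \<and>
     (\<forall>n. fpair m (P n * P n) \<noteq> 0)"

fun chebU :: "nat \<Rightarrow> real poly" where
  "chebU 0 = 1"
| "chebU (Suc 0) = [:0, 1:]"
| "chebU (Suc (Suc n)) = [:0, 1:] * chebU (Suc n) - Polynomial.smult (1/4) (chebU n)"

definition alpha_m :: "nat \<Rightarrow> real" where
  "alpha_m n = (if even n then (real n + 2) / (4 * real n) else 1/4)"

definition chebU_inv :: "nat \<Rightarrow> real poly" where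
  "chebU_inv n = (if n = 0 then 1 else if n = 1 then [:0, 1:]
                  else chebU n + Polynomial.smult (alpha_m n) (chebU (n - 2)))"

definition a_m :: "nat \<Rightarrow> real" where
  "a_m n = (if n = 1 then -1/4 else if even n then (real n + 2) / (4 * real n)
            else (real n - 1) / (4 * (real n + 1)))"

text \<open>Stieltjes function S(z) = sum m_n z^(-n-1), as a formal power series in w = 1/z.\<close>
definition stieltjes :: "(nat \<Rightarrow> real) \<Rightarrow> real fps" where
  "stieltjes m = Abs_fps (\<lambda>k. if k = 0 then 0 else m (k - 1))"

end

theory Submission
  imports Defs
begin


lemma pos1: "-1 < x \<Longrightarrow> x < (1::real) \<Longrightarrow> 0 < 1 - x\<^sup>2"
  by (simp add: abs_square_less_1 abs_less_iff)

lemma aux: "y \<noteq> 0 \<Longrightarrow> (y*y)*(c/y) = c*(y::real)" by (simp add: field_simps)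

lemma aux2:
  fixes a b c r :: real
  shows "-3 * b * c + (r + 1) * (a - b) * c = (r + 1) * (a * c) - (r + 4) * (b * c)"
  by (simp add: algebra_simps)

lemma sq_deriv:
  assumes "-1 < x" "x < (1::real)"
  shows "((\<lambda>x. sqrt (1 - x\<^sup>2)) has_real_derivative (- x / sqrt (1 - x\<^sup>2))) (at x)"
proof -
  have pos: "0 < 1 - x\<^sup>2" using pos1 assms .
  have d1: "((\<lambda>x. 1 - x\<^sup>2) has_real_derivative (0 - real 2 * x ^ (2 - Suc 0))) (at x)"
    by (rule DERIV_diff[OF DERIV_const DERIV_pow])
  have "((\<lambda>x. sqrt (1 - x\<^sup>2)) has_real_derivative (inverse (sqrt (1 - x\<^sup>2)) / 2 * (0 - real 2 * x ^ (2 - Suc 0)))) (at x)"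
    using DERIV_chain2[OF DERIV_real_sqrt[OF pos] d1] .
  moreover have "inverse (sqrt (1 - x\<^sup>2)) / 2 * (0 - real 2 * x ^ (2 - Suc 0)) = - x / sqrt (1 - x\<^sup>2)"
    by (simp add: field_simps)
  ultimately show ?thesis by simp
qed

lemma dG1:
  assumes "-1 < x" "x < (1::real)"
  shows "((\<lambda>x. (1 - x\<^sup>2) * sqrt (1 - x\<^sup>2)) has_real_derivative (-3 * (x * sqrt (1 - x\<^sup>2)))) (at x)"
proof -
  have pos: "0 < 1 - x\<^sup>2" using pos1 assms .
  have s2: "sqrt (1 - x\<^sup>2) * sqrt (1 - x\<^sup>2) = 1 - x\<^sup>2" using pos by simp
  have d1: "((\<lambda>x. 1 - x\<^sup>2) has_real_derivative (0 - real 2 * x ^ (2 - Suc 0))) (at x)"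
    by (rule DERIV_diff[OF DERIV_const DERIV_pow])
  have "((\<lambda>x. (1 - x\<^sup>2) * sqrt (1 - x\<^sup>2)) has_real_derivative
      ((1 - x\<^sup>2) * (- x / sqrt (1 - x\<^sup>2)) + (0 - real 2 * x ^ (2 - Suc 0)) * sqrt (1 - x\<^sup>2))) (at x)"
    by (rule DERIV_mult'[OF d1 sq_deriv[OF assms]])
  moreover have e: "(1 - x\<^sup>2) * (- x / sqrt (1 - x\<^sup>2)) + (0 - real 2 * x ^ (2 - Suc 0)) * sqrt (1 - x\<^sup>2)
      = -3 * (x * sqrt (1 - x\<^sup>2))"
  proof -
    have sne: "sqrt (1 - x\<^sup>2) \<noteq> 0" using pos by simp
    have "(1 - x\<^sup>2) * (- x / sqrt (1 - x\<^sup>2)) = (sqrt (1 - x\<^sup>2) * sqrt (1 - x\<^sup>2)) * (- x / sqrt (1 - x\<^sup>2))"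
      by (simp only: s2)
    also have "\<dots> = - x * sqrt (1 - x\<^sup>2)" using aux[OF sne] .
    finally have "(1 - x\<^sup>2) * (- x / sqrt (1 - x\<^sup>2)) = - x * sqrt (1 - x\<^sup>2)" .
    then show ?thesis by simp
  qed
  ultimately show ?thesis by (simp only: e)
qed

lemma mom_has_int: "((\<lambda>x. x ^ n * sqrt (1 - x\<^sup>2)) has_integral cheb_mom n) {-1..1}"
  unfolding cheb_mom_def
  by (intro integrable_integral integrable_continuous_interval continuous_intros)

lemma mom_rec: "(real n + 4) * cheb_mom (n+2) = (real n + 1) * cheb_mom n"
proof -
  define G where "G = (\<lambda>x::real. x ^ (n+1) * ((1 - x\<^sup>2) * sqrt (1 - x\<^sup>2)))"
  define g where "g = (\<lambda>x::real. (real n + 1) * (x ^ n * sqrt (1 - x\<^sup>2)) - (real n + 4) * (x^(n+2) * sqrt (1 - x\<^sup>2)))"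
  have i1: "(g has_integral (G 1 - G (-1))) {-1..1}"
  proof (rule fundamental_theorem_of_calculus_interior)
    show "continuous_on {-1..1} G" unfolding G_def by (intro continuous_intros)
    fix x :: real assume x: "x \<in> {-1<..<1}"
    then have x1: "-1 < x" "x < 1" by auto
    have "(G has_real_derivative (x ^ (n+1) * (-3 * (x * sqrt (1 - x\<^sup>2))) +
          real (n+1) * x ^ (n+1 - Suc 0) * ((1 - x\<^sup>2) * sqrt (1 - x\<^sup>2)))) (at x)"
      unfolding G_def by (rule DERIV_mult'[OF DERIV_pow dG1[OF x1]])
    moreover have "x ^ (n+1) * (-3 * (x * sqrt (1 - x\<^sup>2))) +
          real (n+1) * x ^ (n+1 - Suc 0) * ((1 - x\<^sup>2) * sqrt (1 - x\<^sup>2)) = g x"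
    proof -
      have p1: "x^(n+1) * x = x^(n+2)" "x^n * x\<^sup>2 = x^(n+2)" by (simp_all add: power_add power2_eq_square)
      have "x ^ (n+1) * (-3 * (x * sqrt (1 - x\<^sup>2))) +
          real (n+1) * x ^ (n+1 - Suc 0) * ((1 - x\<^sup>2) * sqrt (1 - x\<^sup>2))
          = -3 * (x^(n+1) * x) * sqrt (1 - x\<^sup>2) + (real n + 1) * (x^n - x^n * x\<^sup>2) * sqrt (1 - x\<^sup>2)"
        by (simp add: right_diff_distrib mult.assoc add.commute)
      also have "\<dots> = g x" unfolding p1 g_def by (rule aux2)
      finally show ?thesis .
    qed
    ultimately show "(G has_vector_derivative g x) (at x)"
      by (simp add: has_real_derivative_iff_has_vector_derivative)
  qed simp
  have g: "G 1 - G (-1) = 0" unfolding G_def by simp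
  have i2: "(g has_integral ((real n + 1) * cheb_mom n - (real n + 4) * cheb_mom (n+2))) {-1..1}"
    unfolding g_def by (intro has_integral_diff has_integral_mult_right mom_has_int)
  have "(real n + 1) * cheb_mom n - (real n + 4) * cheb_mom (n+2) = G 1 - G (-1)"
    by (rule has_integral_unique[OF i2 i1])
  then show ?thesis using g by simp
qed

lemma mom0: "cheb_mom 0 = pi / 2"
proof -
  define G where "G = (\<lambda>x::real. (x * sqrt (1 - x\<^sup>2) + arcsin x) / 2)"
  have int: "((\<lambda>x. x ^ 0 * sqrt (1 - x\<^sup>2)) has_integral (G 1 - G (-1))) {-1..1}"
  proof (rule fundamental_theorem_of_calculus_interior)
    show "continuous_on {-1..1} G" unfolding G_def
      by (intro continuous_intros continuous_on_arcsin') auto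
    fix x :: real assume x: "x \<in> {-1<..<1}"
    then have x1: "-1 < x" "x < 1" by auto
    have pos: "0 < 1 - x\<^sup>2" using pos1 x1 .
    have s2: "sqrt (1 - x\<^sup>2) * sqrt (1 - x\<^sup>2) = 1 - x\<^sup>2" using pos by simp
    have "(G has_real_derivative ((x * (- x / sqrt (1 - x\<^sup>2)) + 1 * sqrt (1 - x\<^sup>2) + inverse (sqrt (1 - x\<^sup>2))) / 2)) (at x)"
      unfolding G_def
      by (rule DERIV_cdivide[OF DERIV_add[OF DERIV_mult'[OF DERIV_ident sq_deriv[OF x1]] DERIV_arcsin[OF x1]]])
    moreover have e: "(x * (- x / sqrt (1 - x\<^sup>2)) + 1 * sqrt (1 - x\<^sup>2) + inverse (sqrt (1 - x\<^sup>2))) / 2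
        = x ^ 0 * sqrt (1 - x\<^sup>2)"
    proof -
      have "x * (- x / sqrt (1 - x\<^sup>2)) + inverse (sqrt (1 - x\<^sup>2)) = (1 - x\<^sup>2) / sqrt (1 - x\<^sup>2)"
        by (simp add: inverse_eq_divide diff_divide_distrib power2_eq_square)
      also have "\<dots> = sqrt (1 - x\<^sup>2)" using pos s2 by (simp add: field_simps)
      finally show ?thesis by simp
    qed
    ultimately show "(G has_vector_derivative (x ^ 0 * sqrt (1 - x\<^sup>2))) (at x)"
      unfolding has_real_derivative_iff_has_vector_derivative by (simp only: e)
  qed simp
  have g1: "G 1 = pi/4" unfolding G_def by simp
  have g2: "G (-1) = - (pi/4)" unfolding G_def by simp
  have "cheb_mom 0 = G 1 - G (-1)" by (rule has_integral_unique[OF mom_has_int[of 0] int])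
  then show ?thesis using g1 g2 by simp
qed

lemma mom1: "cheb_mom 1 = 0"
proof -
  define G where "G = (\<lambda>x::real. (1 - x\<^sup>2) * sqrt (1 - x\<^sup>2))"
  have i1: "((\<lambda>x. (-3) * (x ^ 1 * sqrt (1 - x\<^sup>2))) has_integral (G 1 - G (-1))) {-1..1}"
  proof (rule fundamental_theorem_of_calculus_interior)
    show "continuous_on {-1..1} G" unfolding G_def by (intro continuous_intros)
    fix x :: real assume x: "x \<in> {-1<..<1}"
    then have x1: "-1 < x" "x < 1" by auto
    show "(G has_vector_derivative ((-3) * (x ^ 1 * sqrt (1 - x\<^sup>2)))) (at x)"
      using dG1[OF x1] unfolding G_def
      by (simp add: has_real_derivative_iff_has_vector_derivative)
  qed simp
  have g: "G 1 - G (-1) = 0" unfolding G_def by simp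
  have i2: "((\<lambda>x. (-3) * (x ^ 1 * sqrt (1 - x\<^sup>2))) has_integral ((-3) * cheb_mom 1)) {-1..1}"
    by (intro has_integral_mult_right mom_has_int)
  have "(-3) * cheb_mom 1 = G 1 - G (-1)" by (rule has_integral_unique[OF i2 i1])
  then show ?thesis using g by simp
qed


lemma lin1: "(1/2::real)*a = (k+1)*a + (k+1+1)*b \<Longrightarrow> (2*k+4)*b + (2*k+1)*a = 0"
  by (simp add: algebra_simps)

lemma lin2: "(2*k+4)*b + (2*k+1)*a = (0::real) \<Longrightarrow> (2 * k + 1) * (p * c * a) = 2 * (k + 2) * (p * (- 1 * c) * b)"
proof -
  assume h: "(2*k+4)*b + (2*k+1)*a = (0::real)"
  have "(2 * k + 1) * (p * c * a) = p * c * ((2*k+1)*a)" by (simp add: algebra_simps)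
  also have "\<dots> = p * c * (- ((2*k+4)*b))" using h by (simp add: add_eq_0_iff)
  also have "\<dots> = 2 * (k + 2) * (p * (- 1 * c) * b)" by (simp add: algebra_simps)
  finally show ?thesis .
qed

definition gg :: "nat \<Rightarrow> real" where "gg k = (1/2::real) gchoose k"

lemma gg_rec: "(2 * real k + 4) * gg (Suc (Suc k)) + (2 * real k + 1) * gg (Suc k) = 0"
proof -
  have H: "(1/2::real) * gg (Suc k) = real (Suc k) * gg (Suc k) + real (Suc (Suc k)) * gg (Suc (Suc k))"
    using gbinomial_mult_1[of "1/2::real" "Suc k"] unfolding gg_def .
  have H': "(1/2::real) * gg (Suc k) = (real k + 1) * gg (Suc k) + (real k + 1 + 1) * gg (Suc (Suc k))"
    using H by (simp add: add.commute)
  show ?thesis using lin1[OF H'] .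
qed

lemma mom1': "cheb_mom (Suc 0) = 0" using mom1 by simp

lemma mom_odd: "cheb_mom (2*k+1) = 0"
proof (induction k)
  case 0 then show ?case using mom1 by simp
next
  case (Suc k)
  have "(real (2*k+1) + 4) * cheb_mom (2*k+1+2) = (real (2*k+1) + 1) * cheb_mom (2*k+1)"
    by (rule mom_rec)
  then show ?case using Suc by (simp add: add_pos_pos)
qed

lemma mom_even: "cheb_mom (2*k) = pi * (-1)^k * gg (Suc k)"
proof (induction k)
  case 0 then show ?case using mom0 by (simp add: gg_def)
next
  case (Suc k)
  have "(real (2*k) + 4) * cheb_mom (2*k+2) = (real (2*k) + 1) * cheb_mom (2*k)"
    by (rule mom_rec)
  then have "2 * (real k + 2) * cheb_mom (2*k+2) = (2*real k + 1) * (pi * (-1)^k * gg (Suc k))"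
    using Suc by (simp add: algebra_simps)
  also have "\<dots> = 2 * (real k + 2) * (pi * (-1)^(Suc k) * gg (Suc (Suc k)))"
    using lin2[OF gg_rec[of k]] by (simp only: power_Suc)
  finally have c: "2 * (real k + 2) * cheb_mom (2*k+2) = 2 * (real k + 2) * (pi * (-1)^(Suc k) * gg (Suc (Suc k)))" .
  have nz: "2 * (real k + 2) \<noteq> 0" by simp
  have "cheb_mom (2*k+2) = pi * (-1)^(Suc k) * gg (Suc (Suc k))"
    using mult_cancel_left[of "2 * (real k + 2)"] nz c by blast
  then show ?case by simp
qed

definition mcf :: "nat \<Rightarrow> real" where
  "mcf n = (if even n then pi * (-1)^(n div 2) * gg (Suc (n div 2)) else 0)"

lemma mom_cf: "cheb_mom n = mcf n"
  by (cases "even n") (auto simp: mcf_def mom_even elim!: evenE oddE intro: mom_odd)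

lemma gg_conv: "(\<Sum>a\<le>K. gg (Suc a) * gg (Suc (K - a))) = - 2 * gg (K+2)"
proof -
  have V: "(\<Sum>j\<in>{0..K+2}. gg j * gg (K + 2 - j)) = 0"
    using gbinomial_Vandermonde[of "1/2::real" "1/2" "K+2"]
    unfolding gg_def using binomial_gbinomial[of 1 "K+2", where 'a=real] by simp
  define f where "f = (\<lambda>j. gg j * gg (K + 2 - j))"
  have e1: "(\<Sum>j\<le>Suc (Suc K). f j) = (\<Sum>j\<le>Suc K. f j) + f (Suc (Suc K))" by (rule sum.atMost_Suc)
  have e2: "(\<Sum>j\<le>Suc K. f j) = f 0 + (\<Sum>a\<le>K. f (Suc a))" by (rule sum.atMost_Suc_shift)
  have "(\<Sum>j\<in>{0..K+2}. gg j * gg (K + 2 - j)) = gg 0 * gg (K+2) + (\<Sum>a\<le>K. gg (Suc a) * gg (K + 2 - Suc a)) + gg (K+2) * gg 0"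
    using e1 e2 unfolding f_def atLeast0AtMost by (simp add: add_2_eq_Suc')
  also have "(\<Sum>a\<le>K. gg (Suc a) * gg (K + 2 - Suc a)) = (\<Sum>a\<le>K. gg (Suc a) * gg (Suc (K - a)))"
    by (intro sum.cong) (auto simp: Suc_diff_le)
  finally show ?thesis using V by (simp add: gg_def)
qed

lemma sum_even_part:
  fixes f :: "nat \<Rightarrow> real"
  assumes "\<And>k. odd k \<Longrightarrow> f k = 0"
  shows "(\<Sum>k\<le>2*K. f k) = (\<Sum>a\<le>K. f (2*a))"
proof (induction K)
  case 0 then show ?case by simp
next
  case (Suc K)
  have "(\<Sum>k\<le>2*Suc K. f k) = (\<Sum>k\<le>2*K. f k) + f (Suc (2*K)) + f (2 * Suc K)"
    by (simp add: sum.atMost_Suc)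
  then show ?case using Suc assms[of "Suc (2*K)"] by simp
qed

lemma conv: "(2/pi) * cheb_mom (N+2) = (1/pi^2) * (\<Sum>j\<le>N. cheb_mom j * cheb_mom (N-j))"
proof (cases "even N")
  case True
  then obtain K where N: "N = 2*K" by (elim evenE)
  have "(\<Sum>j\<le>N. cheb_mom j * cheb_mom (N-j)) = (\<Sum>a\<le>K. cheb_mom (2*a) * cheb_mom (N-2*a))"
    unfolding N by (rule sum_even_part) (auto simp: mom_cf mcf_def)
  also have "\<dots> = (\<Sum>a\<le>K. pi^2 * (-1)^K * (gg (Suc a) * gg (Suc (K - a))))"
  proof (intro sum.cong refl)
    fix a assume "a \<in> {..K}"
    then have e: "N - 2*a = 2*(K-a)" and p: "(-1::real)^a * (-1)^(K-a) = (-1)^K" unfolding N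
      by (auto simp: power_add[symmetric])
    have "cheb_mom (2*a) * cheb_mom (2*(K-a)) = (pi * (-1)^a * gg (Suc a)) * (pi * (-1)^(K-a) * gg (Suc (K-a)))"
      by (simp only: mom_even)
    also have "\<dots> = pi^2 * ((-1)^a * (-1)^(K-a)) * (gg (Suc a) * gg (Suc (K - a)))"
      by (simp add: power2_eq_square)
    finally show "cheb_mom (2*a) * cheb_mom (N-2*a) = pi^2 * (-1)^K * (gg (Suc a) * gg (Suc (K - a)))"
      unfolding e p .
  qed
  also have "\<dots> = pi^2 * (-1)^K * (- 2 * gg (K+2))"
    by (simp add: sum_distrib_left[symmetric] gg_conv)
  finally show ?thesis unfolding N using mom_even[of "Suc K"]
    by (simp add: power2_eq_square field_simps)
next
  case False
  have "(\<Sum>j\<le>N. cheb_mom j * cheb_mom (N-j)) = 0"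
  proof (intro sum.neutral ballI)
    fix j assume "j \<in> {..N}"
    then have "odd j \<or> odd (N - j)" using False by auto
    then show "cheb_mom j * cheb_mom (N-j) = 0" by (auto simp: mom_cf mcf_def)
  qed
  moreover have "cheb_mom (N+2) = 0" using False by (simp add: mom_cf mcf_def)
  ultimately show ?thesis by simp
qed

definition lcf :: "nat \<Rightarrow> real" where
  "lcf n = (if n = 0 then 2/pi else if n = 1 then 0 else - cheb_mom (n-2) / pi^2)"

lemma inv_cf: "inv_mom cheb_mom n = lcf n"
proof (induction n rule: less_induct)
  case (less n)
  show ?case
  proof (cases n)
    case 0 then show ?thesis by (simp add: lcf_def mom0)
  next
    case (Suc n')
    note IH = less[unfolded Suc]
    show ?thesis
    proof (cases n')
      case 0 then show ?thesis using Suc by (simp add: lcf_def mom0 mom1')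
    next
      case (Suc n2)
      show ?thesis
      proof (cases n2)
        case 0
        have m2: "cheb_mom (Suc (Suc 0)) = pi / 8" using conv[of 0] mom0 by (simp add: power2_eq_square field_simps)
        then show ?thesis using \<open>n = Suc n'\<close> Suc IH \<open>n2 = 0\<close>
          by (simp add: lcf_def mom0 mom1' sum.atMost_Suc numeral_2_eq_2 power2_eq_square field_simps)
      next
        case (Suc N)
        have eq: "(\<Sum>k\<le>Suc (Suc N). cheb_mom (Suc (Suc (Suc N)) - k) * inv_mom cheb_mom k)
            = cheb_mom (N+3) * (2/pi) - (1/pi^2) * (\<Sum>k\<le>N. cheb_mom (Suc N - k) * cheb_mom k)"
        proof -
          have "(\<Sum>k\<le>Suc (Suc N). cheb_mom (Suc (Suc (Suc N)) - k) * inv_mom cheb_mom k)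
             = cheb_mom (N+3) * inv_mom cheb_mom 0 + cheb_mom (N+2) * inv_mom cheb_mom 1
               + (\<Sum>k\<le>N. cheb_mom (Suc N - k) * inv_mom cheb_mom (Suc (Suc k)))"
            by (simp only: sum.atMost_Suc_shift) (simp add: numeral_3_eq_3 del: inv_mom.simps)
          also have "(\<Sum>k\<le>N. cheb_mom (Suc N - k) * inv_mom cheb_mom (Suc (Suc k)))
              = (\<Sum>k\<le>N. cheb_mom (Suc N - k) * lcf (Suc (Suc k)))"
            using IH \<open>n' = Suc n2\<close> \<open>n2 = Suc N\<close> by (intro sum.cong refl) (auto simp del: inv_mom.simps)
          also have "(\<Sum>k\<le>N. cheb_mom (Suc N - k) * lcf (Suc (Suc k))) = -(1/pi^2) * (\<Sum>k\<le>N. cheb_mom (Suc N - k) * cheb_mom k)"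
            by (simp add: lcf_def sum_distrib_left)
          also have "inv_mom cheb_mom 0 = 2/pi" by (simp add: mom0)
          also have "inv_mom cheb_mom 1 = 0" by (simp add: mom0 mom1')
          finally show ?thesis by (simp add: mult.commute)
        qed
        have c: "(2/pi) * cheb_mom (Suc N+2) = (1/pi^2) * ((\<Sum>k\<le>N. cheb_mom (Suc N - k) * cheb_mom k) + cheb_mom (Suc N) * (pi/2))"
          using conv[of "Suc N"] by (simp add: sum.atMost_Suc mom0 mult.commute)
        show ?thesis using \<open>n = Suc n'\<close> \<open>n' = Suc n2\<close> \<open>n2 = Suc N\<close>
          apply (simp only: inv_mom.simps eq)
          using c by (simp add: lcf_def mom0 field_simps power2_eq_square numeral_3_eq_3)
      qed
    qed
  qed
qed


lemma fpair_bound: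
  assumes "degree p \<le> N"
  shows "fpair m p = (\<Sum>k\<le>N. coeff p k * m k)"
proof -
  have "(\<Sum>k\<le>N. coeff p k * m k) = (\<Sum>k\<le>degree p. coeff p k * m k)"
    using assms by (intro sum.mono_neutral_right) (auto simp: coeff_eq_0)
  then show ?thesis by (simp add: fpair_def)
qed

lemma fpair_add: "fpair m (p + q) = fpair m p + fpair m q"
proof -
  let ?N = "max (degree p) (degree q)"
  have "degree (p + q) \<le> ?N" by (rule degree_add_le) auto
  then show ?thesis
    by (simp add: fpair_bound[of _ ?N] sum.distrib algebra_simps)
qed

lemma fpair_smult: "fpair m (Polynomial.smult c p) = c * fpair m p"
  by (simp add: fpair_bound[of "Polynomial.smult c p" "degree p"] fpair_def sum_distrib_left algebra_simps)

lemma fpair_0 [simp]: "fpair m 0 = 0"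
  by (simp add: fpair_def)

lemma fpair_minus: "fpair m (p - q) = fpair m p - fpair m q"
  using fpair_add[of m "p - q" q] by simp

lemma fpair_uminus: "fpair m (- p) = - fpair m p"
  using fpair_minus[of m 0 p] by simp

lemma fpair_sum: "fpair m (\<Sum>i\<in>A. f i) = (\<Sum>i\<in>A. fpair m (f i))"
  by (induction A rule: infinite_finite_induct) (auto simp: fpair_add)

lemma fpair_monom: "fpair m (monom c k) = c * m k"
proof -
  have eq: "(\<lambda>ka. coeff (monom c k) ka * m ka) = (\<lambda>ka. if ka = k then c * m k else 0)"
    by (auto simp: coeff_monom)
  have "fpair m (monom c k) = (\<Sum>ka\<le>k. coeff (monom c k) ka * m ka)"
    by (rule fpair_bound) (rule degree_monom_le)
  also have "\<dots> = (\<Sum>ka\<le>k. if ka = k then c * m k else 0)" unfolding eq ..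
  also have "\<dots> = c * m k" by simp
  finally show ?thesis .
qed

lemma fpair_as_sum: "fpair m p = (\<Sum>i\<le>degree p. coeff p i * fpair m (monom 1 i))"
  unfolding fpair_monom by (simp add: fpair_def)

lemma lin_ext:
  fixes F :: "real poly \<Rightarrow> real"
  assumes add: "\<And>p q. F (p + q) = F p + F q"
    and sm: "\<And>c p. F (Polynomial.smult c p) = c * F p"
    and mon: "\<And>k. F (monom 1 k) = 0"
  shows "F p = 0"
proof -
  have s: "F (\<Sum>i\<in>A. f i) = 0" if "\<And>i. i \<in> A \<Longrightarrow> F (f i) = 0" for A and f :: "nat \<Rightarrow> real poly"
    using that
  proof (induction A rule: infinite_finite_induct)
    case (infinite A) then show ?case using sm[of 0 0] by simp
  next
    case empty then show ?case using sm[of 0 0] by simp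
  next
    case (insert x F') then show ?case by (simp add: add)
  qed
  have "p = (\<Sum>i\<le>degree p. Polynomial.smult (coeff p i) (monom 1 i))"
    by (simp add: smult_monom poly_as_sum_of_monoms)
  also have "F \<dots> = 0" by (rule s) (simp add: sm mon)
  finally show ?thesis .
qed

definition XX :: "real poly" where "XX = [:0, 1:]"

lemma XX_monom: "XX = monom 1 1"
  by (simp add: XX_def monom_Suc monom_0)

lemma monom_Suc_mult: "monom (1::real) (Suc j) = monom 1 j * XX"
  by (simp add: XX_monom mult_monom)

lemma favard:
  fixes P :: "nat \<Rightarrow> real poly" and a :: "nat \<Rightarrow> real"
  assumes P0: "P 0 = 1" and P1: "XX * P 0 = P 1"
    and rec: "\<And>n. n \<ge> 1 \<Longrightarrow> XX * P n = P (Suc n) + Polynomial.smult (a n) (P (n - 1))"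
    and z: "\<And>n. n \<ge> 1 \<Longrightarrow> fpair m (P n) = 0"
  shows "\<And>n j. j < n \<Longrightarrow> fpair m (monom 1 j * P n) = 0"
    and "\<And>n. fpair m (monom 1 n * P n) = (\<Prod>j\<in>{1..n}. a j) * m 0"
proof -
  have R: "XX * P n = P (Suc n) + Polynomial.smult (if n = 0 then 0 else a n) (P (n - 1))" for n
    using rec[of n] P1 by (cases "n = 0") auto
  have A: "\<forall>n. j < n \<longrightarrow> fpair m (monom 1 j * P n) = 0" for j
  proof (induction j)
    case 0 then show ?case using z by (simp add: monom_0 one_pCons[symmetric])
  next
    case (Suc j)
    show ?case
    proof (intro allI impI)
      fix n assume "Suc j < n"
      have "monom 1 (Suc j) * P n = monom 1 j * (XX * P n)"
        by (simp add: monom_Suc_mult mult.assoc)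
      also have "\<dots> = monom 1 j * P (Suc n) + Polynomial.smult (a n) (monom 1 j * P (n - 1))"
        using R[of n] \<open>Suc j < n\<close> by (simp add: distrib_left)
      finally have "monom 1 (Suc j) * P n = monom 1 j * P (Suc n) + Polynomial.smult (a n) (monom 1 j * P (n - 1))" .
      then show "fpair m (monom 1 (Suc j) * P n) = 0"
        using Suc \<open>Suc j < n\<close> by (simp add: fpair_add fpair_smult)
    qed
  qed
  then show "\<And>n j. j < n \<Longrightarrow> fpair m (monom 1 j * P n) = 0" by blast
  show "fpair m (monom 1 n * P n) = (\<Prod>j\<in>{1..n}. a j) * m 0" for n
  proof (induction n)
    case 0 then show ?case using P0 by (simp add: monom_0 one_pCons[symmetric] fpair_def)
  next
    case (Suc n)
    have "monom 1 (Suc n) * P (Suc n) = monom 1 n * (XX * P (Suc n))"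
      by (simp add: monom_Suc_mult mult.assoc)
    also have "\<dots> = monom 1 n * P (Suc (Suc n)) + Polynomial.smult (a (Suc n)) (monom 1 n * P n)"
      using R[of "Suc n"] by (simp add: distrib_left)
    finally have "monom 1 (Suc n) * P (Suc n) = monom 1 n * P (Suc (Suc n)) + Polynomial.smult (a (Suc n)) (monom 1 n * P n)" .
    moreover have "fpair m (monom 1 n * P (Suc (Suc n))) = 0" using A by simp
    ultimately show ?case using Suc by (simp add: fpair_add fpair_smult prod.nat_ivl_Suc' mult.assoc)
  qed
qed

lemma fpair_low_deg:
  assumes "\<And>j. j < n \<Longrightarrow> fpair m (monom 1 j * P) = 0" and "degree q < n"
  shows "fpair m (q * P) = 0"
proof -
  have "q * P = (\<Sum>i\<le>degree q. Polynomial.smult (coeff q i) (monom 1 i * P))"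
    by (subst poly_as_sum_of_monoms[symmetric, of q])
       (simp add: sum_distrib_right smult_monom smult_monom_mult)
  then show ?thesis using assms by (simp add: fpair_sum fpair_smult)
qed


definition WW :: "real poly" where "WW = 1 - XX * XX"

lemma XX_mult: "XX * p = pCons 0 p" by (simp add: XX_def)
lemma poly_XX [simp]: "poly XX x = x" by (simp add: XX_def)
lemma poly_WW [simp]: "poly WW x = 1 - x * x" by (simp add: WW_def)

lemma U_rec: "chebU (Suc (Suc n)) = XX * chebU (Suc n) - Polynomial.smult (1/4) (chebU n)"
  by (simp add: XX_def)
lemma U_rec': "XX * chebU (Suc n) = chebU (Suc (Suc n)) + Polynomial.smult (1/4) (chebU n)"
  by (simp add: XX_mult)
lemma U1: "chebU (Suc 0) = XX" by (simp add: XX_def)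

lemma poly_ext_eq: "(\<And>x. poly p x = poly q (x::real)) \<Longrightarrow> p = q"
  using poly_eq_poly_eq_iff[of p q] by blast

lemma U_deg: "degree (chebU n) = n \<and> coeff (chebU n) n = 1"
proof (induction n rule: chebU.induct)
  case 1 then show ?case by simp
next
  case 2 then show ?case by simp
next
  case (3 n)
  have nz: "chebU (Suc n) \<noteq> 0" using 3(1) by auto
  have e: "chebU (Suc (Suc n)) = pCons 0 (chebU (Suc n)) + - Polynomial.smult (1/4) (chebU n)"
    by simp
  have d1: "degree (pCons 0 (chebU (Suc n))) = Suc (Suc n)" using 3(1) nz by simp
  have s: "degree (- Polynomial.smult (1/4) (chebU n)) < Suc (Suc n)" using 3(2) by simp
  have "degree (pCons 0 (chebU (Suc n)) + - Polynomial.smult (1/4) (chebU n)) = Suc (Suc n)"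
    using degree_add_eq_left[of "- Polynomial.smult (1/4) (chebU n)" "pCons 0 (chebU (Suc n))"] d1 s by simp
  moreover have "coeff (chebU n) (Suc (Suc n)) = 0" using 3(2) by (simp add: coeff_eq_0)
  ultimately show ?case using 3(1) unfolding e by simp
qed

abbreviation S1 :: "real poly \<Rightarrow> real poly" where "S1 \<equiv> poly_shift 1"

lemma S_pCons: "S1 (pCons a p) = p" by (rule poly_eqI) (simp add: coeff_poly_shift)
lemma S_XX_mult: "S1 (XX * p) = p" unfolding XX_mult by (rule S_pCons)
lemma S_add: "poly_shift k (p + q) = poly_shift k p + poly_shift k q" by (simp add: poly_eq_iff coeff_poly_shift)
lemma S_diff: "poly_shift k (p - q) = poly_shift k p - poly_shift k q" by (simp add: poly_eq_iff coeff_poly_shift)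
lemma S_smult: "poly_shift k (Polynomial.smult c p) = Polynomial.smult c (poly_shift k p)"
  by (simp add: poly_eq_iff coeff_poly_shift)
lemma S_S: "S1 (S1 p) = poly_shift 2 p" by (simp add: poly_eq_iff coeff_poly_shift)

lemma SU_rec: "S1 (chebU (Suc (Suc n))) = chebU (Suc n) - Polynomial.smult (1/4) (S1 (chebU n))"
  by (simp only: U_rec S_diff S_smult S_XX_mult)

lemma L_formula: "fpair lcf p = (2/pi) * coeff p 0 - (1/pi^2) * fpair cheb_mom (poly_shift 2 p)"
proof -
  let ?F = "\<lambda>p. fpair lcf p - ((2/pi) * coeff p 0 - (1/pi^2) * fpair cheb_mom (poly_shift 2 p))"
  have add: "\<And>p q. ?F (p + q) = ?F p + ?F q" by (simp add: fpair_add S_add algebra_simps)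
  have sm: "\<And>c p. ?F (Polynomial.smult c p) = c * ?F p" by (simp add: fpair_smult S_smult algebra_simps)
  have mon: "\<And>k. ?F (monom 1 k) = 0"
  proof -
    fix k :: nat
    consider "k = 0" | "k = 1" | "k \<ge> 2" by linarith
    then show "?F (monom 1 k) = 0"
    proof cases
      case 1 then show ?thesis by (simp add: lcf_def fpair_def poly_shift_1)
    next
      case 2 then show ?thesis by (simp add: fpair_monom poly_shift_monom lcf_def coeff_monom)
    next
      case 3 then show ?thesis by (simp add: fpair_monom poly_shift_monom lcf_def coeff_monom)
    qed
  qed
  have "?F p = 0" by (rule lin_ext[of ?F, OF add sm mon])
  then show ?thesis by simp
qed

lemma pear_mon: "fpair cheb_mom (WW * pderiv (monom 1 k) - Polynomial.smult 3 (XX * monom 1 k)) = 0"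
proof (cases k)
  case 0 then show ?thesis by (simp add: pderiv_monom XX_monom mult_monom fpair_monom fpair_smult fpair_uminus mom1')
next
  case (Suc j)
  have "WW * pderiv (monom 1 k) - Polynomial.smult 3 (XX * monom 1 k)
      = monom (real j + 1) j - monom (real j + 1) (j + 2) - monom 3 (j + 2)"
    unfolding Suc WW_def XX_monom
    by (simp add: pderiv_monom mult_monom algebra_simps smult_monom)
  moreover have "(real j+1)*cheb_mom j - (real j+1)*cheb_mom (Suc(Suc j)) - 3*cheb_mom (Suc (Suc j)) = 0"
    using mom_rec[of j] by (simp add: algebra_simps)
  ultimately show ?thesis by (simp add: fpair_minus fpair_monom)
qed


lemma alg_deriv:
  fixes x A B C D A' C' D' k :: real
  assumes hD: "D = x*C - A/4" and hC: "C = x*A - B/4" and hD': "D' = C + x*C' - A'/4"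
    and hA': "(1 - x*x)*A' = - ((k+1)*(x*A)) + (k+2)/2*B"
    and hC': "(1 - x*x)*C' = - ((k+2)*(x*C)) + (k+3)/2*A"
  shows "(1 - x*x)*D' = - ((k+3)*(x*D)) + (k+4)/2*C"
proof -
  have "(1 - x*x)*D' = (1 - x*x)*C + x*((1 - x*x)*C') - ((1 - x*x)*A')/4"
    unfolding hD' by (simp add: algebra_simps)
  also have "\<dots> = (1 - x*x)*C + x*(- ((k+2)*(x*C)) + (k+3)/2*A) - (- ((k+1)*(x*A)) + (k+2)/2*B)/4"
    by (simp only: hA' hC')
  also have "\<dots> = - ((k+3)*(x*D)) + (k+4)/2*C"
    unfolding hD hC by (simp add: field_simps)
  finally show ?thesis .
qed

lemma deriv_U: "WW * pderiv (chebU (Suc n)) =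
   - Polynomial.smult (real n + 1) (XX * chebU (Suc n)) + Polynomial.smult ((real n + 2)/2) (chebU n)"
proof (induction n rule: nat_less_induct)
  case (1 n)
  show ?case
  proof (cases n)
    case 0 then show ?thesis by (intro poly_ext_eq) (simp add: WW_def XX_def pderiv_pCons algebra_simps)
  next
    case (Suc n1)
    show ?thesis
    proof (cases n1)
      case 0 then show ?thesis using Suc by (intro poly_ext_eq) (simp add: WW_def XX_def pderiv_pCons algebra_simps)
    next
      case (Suc k)
      have n: "n = Suc (Suc k)" using \<open>n = Suc n1\<close> Suc by simp
      have IH1: "WW * pderiv (chebU (Suc k)) =
         - Polynomial.smult (real k + 1) (XX * chebU (Suc k)) + Polynomial.smult ((real k + 2)/2) (chebU k)"
        using 1 n by auto
      have IH2: "WW * pderiv (chebU (Suc (Suc k))) =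
         - Polynomial.smult (real (Suc k) + 1) (XX * chebU (Suc (Suc k))) + Polynomial.smult ((real (Suc k) + 2)/2) (chebU (Suc k))"
        using 1 n by blast
      show ?thesis unfolding n
      proof (rule poly_ext_eq)
        fix x :: real
        let ?A = "poly (chebU (Suc k)) x" and ?B = "poly (chebU k) x"
        let ?C = "poly (chebU (Suc (Suc k))) x" and ?D = "poly (chebU (Suc (Suc (Suc k)))) x"
        let ?A' = "poly (pderiv (chebU (Suc k))) x" and ?C' = "poly (pderiv (chebU (Suc (Suc k)))) x"
        let ?D' = "poly (pderiv (chebU (Suc (Suc (Suc k))))) x"
        have hD: "?D = x * ?C - ?A/4" by (subst U_rec) simp
        have hC: "?C = x * ?A - ?B/4" by (subst U_rec) simp
        have hD': "?D' = ?C + x * ?C' - ?A'/4"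
          by (subst U_rec) (simp add: pderiv_diff pderiv_mult pderiv_smult XX_def pderiv_pCons)
        have hA': "(1 - x*x) * ?A' = - ((real k+1)*(x * ?A)) + (real k+2)/2 * ?B"
          using arg_cong[OF IH1, of "\<lambda>p. poly p x"] by simp
        have hC': "(1 - x*x) * ?C' = - ((real k+2)*(x * ?C)) + (real k+3)/2 * ?A"
          using arg_cong[OF IH2, of "\<lambda>p. poly p x"] by (simp add: add.commute)
        have "(1 - x*x) * ?D' = - ((real k+3)*(x * ?D)) + (real k+4)/2 * ?C"
          by (rule alg_deriv[OF hD hC hD' hA' hC'])
        then show "poly (WW * pderiv (chebU (Suc (Suc (Suc k))))) x =
          poly (- Polynomial.smult (real (Suc (Suc k)) + 1) (XX * chebU (Suc (Suc (Suc k)))) +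
            Polynomial.smult ((real (Suc (Suc k)) + 2) / 2) (chebU (Suc (Suc k)))) x"
          by (simp add: add.commute)
      qed
    qed
  qed
qed


lemma ps1 [simp]: "poly_shift (Suc 0) 1 = 0" by (simp add: poly_shift_1)
lemma ps2 [simp]: "poly_shift (Suc 0) [:0,1:] = 1"
  by (rule poly_eqI) (simp add: coeff_poly_shift coeff_pCons split: nat.split)
lemma fpair_x [simp]: "fpair m [:0,1:] = m 1" by (simp add: fpair_def)
lemma fpair_one [simp]: "fpair m 1 = m 0" by (simp add: fpair_def)

lemma pearson: "fpair cheb_mom (WW * pderiv p - Polynomial.smult 3 (XX * p)) = 0"
proof -
  let ?F = "\<lambda>p. fpair cheb_mom (WW * pderiv p - Polynomial.smult 3 (XX * p))"
  have add: "\<And>p q. ?F (p + q) = ?F p + ?F q"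
  proof -
    fix p q :: "real poly"
    have "WW * pderiv (p + q) - Polynomial.smult 3 (XX * (p + q)) =
        (WW * pderiv p - Polynomial.smult 3 (XX * p)) + (WW * pderiv q - Polynomial.smult 3 (XX * q))"
      by (rule poly_ext_eq) (simp add: pderiv_add algebra_simps)
    then show "?F (p + q) = ?F p + ?F q" by (simp add: fpair_add)
  qed
  have sm: "\<And>c p. ?F (Polynomial.smult c p) = c * ?F p"
  proof -
    fix c and p :: "real poly"
    have "WW * pderiv (Polynomial.smult c p) - Polynomial.smult 3 (XX * Polynomial.smult c p) =
        Polynomial.smult c (WW * pderiv p - Polynomial.smult 3 (XX * p))"
      by (rule poly_ext_eq) (simp add: pderiv_smult algebra_simps)
    then show "?F (Polynomial.smult c p) = c * ?F p" by (simp add: fpair_smult)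
  qed
  have mon: "\<And>k. ?F (monom 1 k) = 0" by (rule pear_mon)
  show ?thesis by (rule lin_ext[of ?F, OF add sm mon])
qed

lemma u_rec: "(real n + 4) * fpair cheb_mom (chebU (Suc (Suc n))) = (real n / 4) * fpair cheb_mom (chebU n)"
proof -
  have e: "WW * pderiv (chebU (Suc n)) - Polynomial.smult 3 (XX * chebU (Suc n)) =
      - Polynomial.smult (real n + 4) (chebU (Suc (Suc n))) + Polynomial.smult (real n / 4) (chebU n)"
    apply (rule poly_ext_eq)
    apply (simp add: deriv_U U_rec algebra_simps)
    apply (simp add: field_simps)
    done
  have "- ((real n + 4) * fpair cheb_mom (chebU (Suc (Suc n)))) + (real n / 4) * fpair cheb_mom (chebU n) = 0"
    using pearson[of "chebU (Suc n)"] unfolding e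
    by (simp only: fpair_add fpair_smult fpair_uminus)
  then show ?thesis by linarith
qed

lemma u0: "fpair cheb_mom (chebU 0) = pi/2" by (simp add: fpair_def mom0)

lemma u_Suc: "fpair cheb_mom (chebU (Suc n)) = 0"
proof (induction n rule: nat_less_induct)
  case (1 n)
  show ?case
  proof (cases n)
    case 0 then show ?thesis by (simp add: mom1')
  next
    case (Suc k)
    have "(real k + 4) * fpair cheb_mom (chebU (Suc (Suc k))) = (real k / 4) * fpair cheb_mom (chebU k)"
      by (rule u_rec)
    moreover have "real k * fpair cheb_mom (chebU k) = 0"
    proof (cases k)
      case 0 then show ?thesis by simp
    next
      case (Suc k') then show ?thesis using 1 \<open>n = Suc k\<close> by simp
    qed
    ultimately show ?thesis using Suc by (simp add: add_pos_pos)
  qed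
qed

lemma SSU_rec: "S1 (S1 (chebU (Suc (Suc n)))) = S1 (chebU (Suc n)) - Polynomial.smult (1/4) (S1 (S1 (chebU n)))"
  by (simp only: SU_rec S_diff S_smult)

lemma S1_one: "S1 1 = 0" by (simp add: poly_shift_1)
lemma S1_XX: "S1 XX = 1" using S_XX_mult[of 1] by simp

lemma d_rec: "fpair cheb_mom (S1 (chebU (Suc (Suc n)))) = - (1/4) * fpair cheb_mom (S1 (chebU n))"
  by (simp only: SU_rec fpair_minus fpair_smult u_Suc)

lemma d_even: "fpair cheb_mom (S1 (chebU (2*j))) = 0"
proof (induction j)
  case 0 then show ?case by simp
next
  case (Suc j)
  have "fpair cheb_mom (S1 (chebU (2*Suc j))) = - (1/4) * fpair cheb_mom (S1 (chebU (2*j)))"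
    using d_rec[of "2*j"] by simp
  then show ?case using Suc by simp
qed

lemma d_odd: "fpair cheb_mom (S1 (chebU (2*j+1))) = (pi/2) * (-1/4)^j"
proof (induction j)
  case 0 then show ?case by (simp add: mom0)
next
  case (Suc j)
  have "fpair cheb_mom (S1 (chebU (2*Suc j+1))) = - (1/4) * fpair cheb_mom (S1 (chebU (2*j+1)))"
    using d_rec[of "2*j+1"] by simp
  then show ?case using Suc by simp
qed

lemma e_rec: "fpair cheb_mom (S1 (S1 (chebU (Suc (Suc n))))) =
   fpair cheb_mom (S1 (chebU (Suc n))) - (1/4) * fpair cheb_mom (S1 (S1 (chebU n)))"
  by (simp only: SSU_rec fpair_minus fpair_smult)

lemma e_odd: "fpair cheb_mom (S1 (S1 (chebU (2*j+1)))) = 0"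
proof (induction j)
  case 0 then show ?case by simp
next
  case (Suc j)
  have "fpair cheb_mom (S1 (S1 (chebU (2*Suc j+1)))) =
      fpair cheb_mom (S1 (chebU (2*(Suc j)))) - (1/4) * fpair cheb_mom (S1 (S1 (chebU (2*j+1))))"
    using e_rec[of "2*j+1"] by simp
  then show ?case using Suc d_even[of "Suc j"] by simp
qed

lemma e_even: "fpair cheb_mom (S1 (S1 (chebU (2*j)))) = - 2 * pi * real j * (-1/4)^j"
proof (induction j)
  case 0 then show ?case by simp
next
  case (Suc j)
  have "fpair cheb_mom (S1 (S1 (chebU (2*Suc j)))) =
      fpair cheb_mom (S1 (chebU (2*j+1))) - (1/4) * fpair cheb_mom (S1 (S1 (chebU (2*j))))"
    using e_rec[of "2*j"] by simp
  then show ?case using Suc d_odd[of j] by (simp add: field_simps)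
qed

lemma f_rec: "coeff (chebU (Suc (Suc n))) 0 = - (1/4) * coeff (chebU n) 0"
  by simp

lemma f_even: "coeff (chebU (2*j)) 0 = (-1/4)^j"
proof (induction j)
  case 0 then show ?case by simp
next
  case (Suc j)
  then show ?case using f_rec[of "2*j"] by simp
qed

lemma f_odd: "coeff (chebU (2*j+1)) 0 = 0"
proof (induction j)
  case 0 then show ?case by simp
next
  case (Suc j)
  then show ?case using f_rec[of "2*j+1"] by simp
qed

lemma g_even: "fpair lcf (chebU (2*j)) = (2/pi) * (real j + 1) * (-1/4)^j"
  unfolding L_formula S_S[symmetric] f_even e_even by (simp add: field_simps power2_eq_square)

lemma g_odd: "fpair lcf (chebU (2*j+1)) = 0"
  unfolding L_formula S_S[symmetric] f_odd e_odd by simp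


lemma U0: "chebU 0 = [:1:]" by simp

lemma P0: "chebU_inv 0 = 1" by (simp add: chebU_inv_def)
lemma P1: "chebU_inv (Suc 0) = XX" by (simp add: chebU_inv_def XX_def)
lemma PSS: "chebU_inv (Suc (Suc n)) = chebU (Suc (Suc n)) + Polynomial.smult (alpha_m (Suc (Suc n))) (chebU n)"
  by (simp add: chebU_inv_def del: chebU.simps)

lemma alpha_ids:
  fixes k :: nat
  shows "1/4 + alpha_m (k+3) = alpha_m (k+4) + a_m (k+3)"
    and "alpha_m (k+3) / 4 = a_m (k+3) * alpha_m (k+2)"
proof -
  have "1/4 + alpha_m (k+3) = alpha_m (k+4) + a_m (k+3) \<and> alpha_m (k+3) / 4 = a_m (k+3) * alpha_m (k+2)"
  proof (cases "even k")
    case True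
    then have o3: "odd (k+3)" and e4: "even (k+4)" and e2: "even (k+2)" by auto
    have nz: "real k + 4 \<noteq> 0" "real k + 2 \<noteq> 0" "real k + 3 \<noteq> 0" "real k + 6 \<noteq> 0" by linarith+
    have q1: "0 < 256 + (real k * (real k * 16) + real k * 128)"
      by (intro add_pos_nonneg add_nonneg_nonneg mult_nonneg_nonneg) simp_all
    have q2: "0 < 128 + (real k * 96 + real k * (real k * 16))"
      by (intro add_pos_nonneg add_nonneg_nonneg mult_nonneg_nonneg) simp_all
    have p1: "256 + (real k * (real k * 16) + real k * 128) \<noteq> 0" using q1 by linarith
    have p2: "128 + (real k * 96 + real k * (real k * 16)) \<noteq> 0" using q2 by linarith
    show ?thesis unfolding alpha_m_def a_m_def using o3 e4 e2 nz p1 p2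
      by (simp add: field_simps)
  next
    case False
    then have o3: "even (k+3)" and e4: "odd (k+4)" and e2: "odd (k+2)" by auto
    show ?thesis unfolding alpha_m_def a_m_def using o3 e4 e2
      by (simp add: field_simps)
  qed
  then show "1/4 + alpha_m (k+3) = alpha_m (k+4) + a_m (k+3)"
    and "alpha_m (k+3) / 4 = a_m (k+3) * alpha_m (k+2)" by auto
qed

lemma alpha_ids':
  fixes k :: nat
  shows "1/4 + alpha_m (Suc (Suc (Suc k))) = alpha_m (Suc (Suc (Suc (Suc k)))) + a_m (Suc (Suc (Suc k)))"
    and "alpha_m (Suc (Suc (Suc k))) / 4 = a_m (Suc (Suc (Suc k))) * alpha_m (Suc (Suc k))"
proof -
  have e: "k+3 = Suc (Suc (Suc k))" "k+4 = Suc (Suc (Suc (Suc k)))" "k+2 = Suc (Suc k)" by simp_all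
  show "1/4 + alpha_m (Suc (Suc (Suc k))) = alpha_m (Suc (Suc (Suc (Suc k)))) + a_m (Suc (Suc (Suc k)))"
    using alpha_ids(1)[of k] unfolding e .
  show "alpha_m (Suc (Suc (Suc k))) / 4 = a_m (Suc (Suc (Suc k))) * alpha_m (Suc (Suc k))"
    using alpha_ids(2)[of k] unfolding e .
qed

lemma alg_rec:
  fixes x u0 u1 u2 u3 u4 al al' al'' a :: real
  assumes h4: "u4 = x*u3 - u2/4" and h2: "u2 = x*u1 - u0/4"
    and i1: "1/4 + al = al' + a" and i2: "al/4 = a*al''"
  shows "x*(u3 + al*u1) = (u4 + al'*u2) + a*(u2 + al''*u0)"
proof -
  have al': "al' = 1/4 + al - a" using i1 by simp
  have "(u4 + al'*u2) + a*(u2 + al''*u0) = x*u3 + al*u2 + (a*al'')*u0"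
    unfolding h4 al' by (simp add: algebra_simps)
  also have "\<dots> = x*(u3 + al*u1)" unfolding i2[symmetric] h2 by (simp add: algebra_simps)
  finally show ?thesis by simp
qed

lemma rec_P2: "XX * chebU_inv 2 = chebU_inv (Suc 2) + Polynomial.smult (a_m 2) (chebU_inv (2 - 1))"
proof -
    have v: "alpha_m 2 = 1/2" "alpha_m 3 = 1/4" "a_m 2 = 1/2" by (simp_all add: alpha_m_def a_m_def)
    show ?thesis
    proof (rule poly_ext_eq)
      fix x :: real
      have u0: "poly (chebU 0) x = 1" by simp
      have u1: "poly (chebU 1) x = x" by simp
      have u2: "poly (chebU 2) x = x*x - 1/4" by (simp add: numeral_2_eq_2)
      have u3: "poly (chebU 3) x = x*(x*x - 1/4) - x/4" by (simp add: numeral_3_eq_3 algebra_simps)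
      have i2: "poly (chebU_inv 2) x = poly (chebU 2) x + alpha_m 2 * poly (chebU 0) x"
        by (simp add: chebU_inv_def del: chebU.simps)
      have i3: "poly (chebU_inv 3) x = poly (chebU 3) x + alpha_m 3 * poly (chebU 1) x"
        by (simp add: chebU_inv_def del: chebU.simps)
      have i1: "chebU_inv (2-1) = XX" using P1 by simp
      have s3: "Suc 2 = (3::nat)" by simp
      show "poly (XX * chebU_inv 2) x = poly (chebU_inv (Suc 2) + Polynomial.smult (a_m 2) (chebU_inv (2 - 1))) x"
        unfolding s3 i1 poly_mult poly_add poly_smult poly_XX i2 i3 u0 u1 u2 u3 v
        by (simp add: algebra_simps)
    qed
qed

lemma rec_P: "n \<ge> 1 \<Longrightarrow> XX * chebU_inv n = chebU_inv (Suc n) + Polynomial.smult (a_m n) (chebU_inv (n - 1))"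
proof -
  assume "n \<ge> 1"
  then consider "n = 1" | "n = 2" | k where "n = k + 3" by (metis One_nat_def add.commute add_2_eq_Suc' le_Suc_eq le_add_diff_inverse le_zero_eq not_less_eq_eq numeral_3_eq_3 plus_1_eq_Suc)
  then show ?thesis
  proof cases
    case 1 then show ?thesis
      by (intro poly_ext_eq) (simp add: chebU_inv_def alpha_m_def a_m_def XX_def algebra_simps)
  next
    case 2
    then have n2: "n = 2" .
    show ?thesis using rec_P2 unfolding n2 .
  next
    case 3
    then have n3: "n = Suc (Suc (Suc k))" by simp
    have m1: "Suc (Suc (Suc k)) - 1 = Suc (Suc k)" by simp
    show ?thesis unfolding n3 m1
    proof (rule poly_ext_eq)
      fix x :: real
      let ?u = "\<lambda>i. poly (chebU i) x"
      have h4: "?u (Suc (Suc (Suc (Suc k)))) = x * ?u (Suc (Suc (Suc k))) - ?u (Suc (Suc k)) / 4"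
        using arg_cong[OF U_rec[of "Suc (Suc k)"], of "\<lambda>p. poly p x"] by (simp del: chebU.simps)
      have h2: "?u (Suc (Suc k)) = x * ?u (Suc k) - ?u k / 4"
        using arg_cong[OF U_rec[of k], of "\<lambda>p. poly p x"] by (simp del: chebU.simps)
      have A: "x*(?u (Suc (Suc (Suc k))) + alpha_m (Suc (Suc (Suc k))) * ?u (Suc k)) =
          (?u (Suc (Suc (Suc (Suc k)))) + alpha_m (Suc (Suc (Suc (Suc k)))) * ?u (Suc (Suc k)))
          + a_m (Suc (Suc (Suc k))) * (?u (Suc (Suc k)) + alpha_m (Suc (Suc k)) * ?u k)"
        by (rule alg_rec[OF h4 h2 alpha_ids'])
      show "poly (XX * chebU_inv (Suc (Suc (Suc k)))) x =
        poly (chebU_inv (Suc (Suc (Suc (Suc k)))) + Polynomial.smult (a_m (Suc (Suc (Suc k)))) (chebU_inv (Suc (Suc k)))) x"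
        unfolding PSS poly_mult poly_add poly_smult poly_XX using A by simp
    qed
  qed
qed


lemma inv_eq: "inv_mom cheb_mom = lcf" by (rule ext) (rule inv_cf)

lemma LP_zero: "n \<ge> 1 \<Longrightarrow> fpair lcf (chebU_inv n) = 0"
proof -
  assume n1: "n \<ge> 1"
  show ?thesis
  proof (cases n)
    case 0 then show ?thesis using n1 by simp
  next
    case (Suc m)
    show ?thesis
    proof (cases m)
      case 0 then show ?thesis using Suc by (simp add: P1 XX_def lcf_def)
    next
      case (Suc m')
      have nn: "n = Suc (Suc m')" using \<open>n = Suc m\<close> Suc by simp
      have L: "fpair lcf (chebU_inv n) = fpair lcf (chebU (Suc (Suc m'))) + alpha_m (Suc (Suc m')) * fpair lcf (chebU m')"
        unfolding nn PSS by (simp only: fpair_add fpair_smult)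
      show ?thesis
      proof (cases "even m'")
        case True
        then obtain j where j: "m' = 2*j" by (elim evenE)
        have e1: "Suc (Suc m') = 2 * Suc j" using j by simp
        have a: "alpha_m (Suc (Suc m')) = (real j + 2) / (4 * (real j + 1))"
        proof -
          have "alpha_m (Suc (Suc m')) = (2 * (real j + 2)) / (2 * (4 * (real j + 1)))"
            unfolding e1 alpha_m_def by (simp add: algebra_simps)
          also have "\<dots> = (real j + 2) / (4 * (real j + 1))"
            by (rule mult_divide_mult_cancel_left) simp
          finally show ?thesis .
        qed
        have nz: "real j + 1 \<noteq> 0" by linarith
        have "fpair lcf (chebU_inv n) = (2/pi) * (real j + 2) * ((-1/4) * (-1/4)^j)
            + (real j + 2) / (4 * (real j + 1)) * ((2/pi) * (real j + 1) * (-1/4)^j)"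
        proof -
          have r1: "real (Suc j) + 1 = real j + 2" by simp
          show ?thesis unfolding L a unfolding e1 unfolding j g_even r1 power_Suc by (rule refl)
        qed
        also have "\<dots> = 0"
        proof -
          have q: "0 < pi * 4 + pi * (real j * 4)" by (intro add_pos_nonneg) simp_all
          then have "pi * 4 + pi * (real j * 4) \<noteq> 0" by linarith
          then show ?thesis using nz by (simp add: field_simps)
        qed
        finally show ?thesis .
      next
        case False
        then obtain j where j: "m' = 2*j+1" by (elim oddE)
        have e1: "Suc (Suc m') = 2 * Suc j + 1" using j by simp
        show ?thesis unfolding L e1 unfolding j g_odd by simp
      qed
    qed
  qed
qed

lemma P_deg: "degree (chebU_inv n) = n \<and> coeff (chebU_inv n) n = 1"
proof (cases n)
  case 0 then show ?thesis by (simp add: P0)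
next
  case (Suc m)
  show ?thesis
  proof (cases m)
    case 0 then show ?thesis using Suc by (simp add: P1 XX_def)
  next
    case (Suc k)
    have nn: "n = Suc (Suc k)" using \<open>n = Suc m\<close> Suc by simp
    have d: "degree (chebU (Suc (Suc k))) = Suc (Suc k)" "coeff (chebU (Suc (Suc k))) (Suc (Suc k)) = 1"
      using U_deg[of "Suc (Suc k)"] by blast+
    have dk: "degree (chebU k) = k" using U_deg[of k] by blast
    have s: "degree (Polynomial.smult (alpha_m (Suc (Suc k))) (chebU k)) < Suc (Suc k)"
      using degree_smult_le[of "alpha_m (Suc (Suc k))" "chebU k"] dk by linarith
    have c0: "coeff (chebU k) (Suc (Suc k)) = 0" using dk by (intro coeff_eq_0) linarith
    have deg: "degree (chebU (Suc (Suc k)) + Polynomial.smult (alpha_m (Suc (Suc k))) (chebU k)) = degree (chebU (Suc (Suc k)))"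
      by (rule degree_add_eq_left) (unfold d(1), rule s)
    have cf: "coeff (chebU (Suc (Suc k)) + Polynomial.smult (alpha_m (Suc (Suc k))) (chebU k)) (Suc (Suc k)) = 1"
      by (simp only: coeff_add coeff_smult d(2) c0 mult_zero_right add_0_right)
    show ?thesis unfolding nn PSS using deg d(1) cf by (simp only:)
  qed
qed

lemma a_m_nz: "j \<ge> 1 \<Longrightarrow> a_m j \<noteq> 0"
  by (auto simp: a_m_def)

lemma coeff_high:
  fixes q :: "real poly"
  assumes "\<forall>k\<ge>n. coeff q k = 0"
  shows "q = (\<Sum>i<n. Polynomial.smult (coeff q i) (monom 1 i))"
proof (rule poly_eqI)
  fix k
  have f: "(\<lambda>i. coeff (Polynomial.smult (coeff q i) (monom 1 i)) k) = (\<lambda>i. if i = k then coeff q k else 0)"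
    by (auto simp: coeff_monom)
  have "coeff (\<Sum>i<n. Polynomial.smult (coeff q i) (monom 1 i)) k = (\<Sum>i<n. if i = k then coeff q k else 0)"
    unfolding coeff_sum f ..
  also have "\<dots> = (if k < n then coeff q k else 0)" by simp
  also have "\<dots> = coeff q k" using assms by auto
  finally show "coeff q k = coeff (\<Sum>i<n. Polynomial.smult (coeff q i) (monom 1 i)) k" by simp
qed

lemma fpair_low2:
  assumes "\<And>j. j < n \<Longrightarrow> fpair m (monom 1 j * P) = 0" and "\<forall>k\<ge>n. coeff q k = 0"
  shows "fpair m (q * P) = 0"
proof -
  have "q * P = (\<Sum>i<n. Polynomial.smult (coeff q i) (monom 1 i * P))"
    by (subst coeff_high[OF assms(2)]) (simp add: sum_distrib_right)
  then show ?thesis using assms(1) by (simp add: fpair_sum fpair_smult)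
qed

lemma P1': "XX * chebU_inv 0 = chebU_inv 1" by (simp add: chebU_inv_def XX_def)

lemma fav:
  shows "\<And>n j. j < n \<Longrightarrow> fpair lcf (monom 1 j * chebU_inv n) = 0"
    and "\<And>n. fpair lcf (monom 1 n * chebU_inv n) = (\<Prod>j\<in>{1..n}. a_m j) * lcf 0"
  using favard[of chebU_inv a_m lcf, OF P0 P1' rec_P LP_zero] by auto

lemma orth: "n \<noteq> k \<Longrightarrow> fpair lcf (chebU_inv n * chebU_inv k) = 0"
proof -
  have A: "fpair lcf (chebU_inv k * chebU_inv n) = 0" if "k < n" for k n
  proof (rule fpair_low2[of n])
    show "\<And>j. j < n \<Longrightarrow> fpair lcf (monom 1 j * chebU_inv n) = 0" by (rule fav(1))
    show "\<forall>i\<ge>n. coeff (chebU_inv k) i = 0" using P_deg[of k] that by (auto simp: coeff_eq_0)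
  qed
  assume "n \<noteq> k"
  then show ?thesis using A[of k n] A[of n k] by (cases "k < n") (auto simp: mult.commute)
qed

lemma norm: "fpair lcf (chebU_inv n * chebU_inv n) = (\<Prod>j\<in>{1..n}. a_m j) * lcf 0"
proof -
  let ?r = "chebU_inv n - monom 1 n"
  have r: "\<forall>k\<ge>n. coeff ?r k = 0"
  proof (intro allI impI)
    fix k assume "n \<le> k"
    then show "coeff ?r k = 0" using P_deg[of n]
      by (cases "k = n") (auto simp: coeff_monom coeff_eq_0)
  qed
  have "chebU_inv n * chebU_inv n = monom 1 n * chebU_inv n + ?r * chebU_inv n"
    by (simp add: algebra_simps)
  then have "fpair lcf (chebU_inv n * chebU_inv n) = fpair lcf (monom 1 n * chebU_inv n) + fpair lcf (?r * chebU_inv n)"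
    by (simp add: fpair_add)
  also have "fpair lcf (?r * chebU_inv n) = 0" by (rule fpair_low2[OF fav(1) r])
  finally show ?thesis using fav(2)[of n] by simp
qed

lemma norm_nz: "fpair lcf (chebU_inv n * chebU_inv n) \<noteq> 0"
  unfolding norm using a_m_nz by (auto simp: lcf_def)

lemma key:
  assumes "degree q = d"
  shows "fpair lcf (q * chebU_inv d) = lead_coeff q * fpair lcf (chebU_inv d * chebU_inv d)"
proof -
  let ?c = "lead_coeff q"
  let ?r = "q - Polynomial.smult ?c (chebU_inv d)"
  have r: "\<forall>k\<ge>d. coeff ?r k = 0"
  proof (intro allI impI)
    fix k assume "d \<le> k"
    then show "coeff ?r k = 0" using P_deg[of d] assms
      by (cases "k = d") (auto simp: coeff_eq_0)
  qed
  have "q * chebU_inv d = Polynomial.smult ?c (chebU_inv d * chebU_inv d) + ?r * chebU_inv d"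
    by (simp add: algebra_simps)
  then have "fpair lcf (q * chebU_inv d) = ?c * fpair lcf (chebU_inv d * chebU_inv d) + fpair lcf (?r * chebU_inv d)"
    by (simp add: fpair_add fpair_smult)
  also have "fpair lcf (?r * chebU_inv d) = 0" by (rule fpair_low2[OF fav(1) r])
  finally show ?thesis by simp
qed


lemma qd: "quasi_definite lcf"
  unfolding quasi_definite_def
proof
  fix n
  let ?H = "Matrix.mat (Suc n) (Suc n) (\<lambda>(i, j). lcf (i + j))"
  show "Determinant.det ?H \<noteq> 0"
  proof
    assume "Determinant.det ?H = 0"
    then obtain v where v: "v \<in> carrier_vec (Suc n)" "v \<noteq> 0\<^sub>v (Suc n)" "?H *\<^sub>v v = 0\<^sub>v (Suc n)"
      using det_0_iff_vec_prod_zero_field[of ?H "Suc n"] by auto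
    define q where "q = (\<Sum>j<Suc n. monom (v $ j) j)"
    have cq: "coeff q k = (if k < Suc n then v $ k else 0)" for k
    proof -
      have f: "(\<lambda>j. coeff (monom (v $ j) j) k) = (\<lambda>j. if j = k then v $ k else 0)"
        by (auto simp: coeff_monom)
      show ?thesis unfolding q_def coeff_sum f by simp
    qed
    have qi: "fpair lcf (monom 1 i * q) = 0" if i: "i < Suc n" for i
    proof -
      have "monom 1 i * q = (\<Sum>j<Suc n. monom (v $ j) (i + j))"
        unfolding q_def sum_distrib_left mult_monom by simp
      then have "fpair lcf (monom 1 i * q) = (\<Sum>j<Suc n. v $ j * lcf (i + j))"
        by (simp only: fpair_sum fpair_monom)
      also have "\<dots> = (?H *\<^sub>v v) $ i"
        using i v(1) by (simp add: scalar_prod_def atLeast0LessThan mult.commute)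
      also have "\<dots> = 0" using v(3) i by simp
      finally show ?thesis .
    qed
    have qnz: "q \<noteq> 0"
    proof
      assume "q = 0"
      then have "v $ k = 0" if "k < Suc n" for k using cq[of k] that by simp
      then have "v = 0\<^sub>v (Suc n)" using v(1) by (intro eq_vecI) auto
      with v(2) show False by simp
    qed
    define d where "d = degree q"
    have dn: "d \<le> n" unfolding d_def by (rule degree_le) (simp add: cq)
    have z: "fpair lcf (chebU_inv d * q) = 0"
    proof (rule fpair_low2[of "Suc n"])
      show "\<And>j. j < Suc n \<Longrightarrow> fpair lcf (monom 1 j * q) = 0" by (rule qi)
      show "\<forall>k\<ge>Suc n. coeff (chebU_inv d) k = 0" using P_deg[of d] dn by (auto simp: coeff_eq_0)
    qed
    have "fpair lcf (q * chebU_inv d) = lead_coeff q * fpair lcf (chebU_inv d * chebU_inv d)"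
      by (rule key) (simp add: d_def)
    moreover have "lead_coeff q \<noteq> 0" using qnz by simp
    ultimately have "fpair lcf (q * chebU_inv d) \<noteq> 0" using norm_nz[of d] by simp
    with z show False by (simp add: mult.commute)
  qed
qed

lemma int_poly: "integral {-1..1} (\<lambda>x. poly q x * sqrt (1 - x\<^sup>2)) = fpair cheb_mom q"
proof -
  let ?F = "\<lambda>q. integral {-1..1} (\<lambda>x. poly q x * sqrt (1 - x\<^sup>2)) - fpair cheb_mom q"
  have int: "(\<lambda>x. poly q x * sqrt (1 - x\<^sup>2)) integrable_on {-1..1}" for q :: "real poly"
    by (intro integrable_continuous_interval continuous_intros)
  have add: "\<And>p q. ?F (p + q) = ?F p + ?F q"
  proof -
    fix p q :: "real poly"
    have "integral {-1..1} (\<lambda>x. poly (p + q) x * sqrt (1 - x\<^sup>2)) =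
        integral {-1..1} (\<lambda>x. poly p x * sqrt (1 - x\<^sup>2) + poly q x * sqrt (1 - x\<^sup>2))"
      by (simp add: algebra_simps)
    also have "\<dots> = integral {-1..1} (\<lambda>x. poly p x * sqrt (1 - x\<^sup>2)) + integral {-1..1} (\<lambda>x. poly q x * sqrt (1 - x\<^sup>2))"
      by (rule integral_add[OF int int])
    finally show "?F (p + q) = ?F p + ?F q" by (simp add: fpair_add)
  qed
  have sm: "\<And>c p. ?F (Polynomial.smult c p) = c * ?F p"
  proof -
    fix c and p :: "real poly"
    have "integral {-1..1} (\<lambda>x. poly (Polynomial.smult c p) x * sqrt (1 - x\<^sup>2)) =
        integral {-1..1} (\<lambda>x. c * (poly p x * sqrt (1 - x\<^sup>2)))"
      by (simp add: algebra_simps)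
    also have "\<dots> = c * integral {-1..1} (\<lambda>x. poly p x * sqrt (1 - x\<^sup>2))"
      by (rule integral_mult_right)
    finally show "?F (Polynomial.smult c p) = c * ?F p" by (simp add: fpair_smult algebra_simps)
  qed
  have mon: "\<And>k. ?F (monom 1 k) = 0"
    by (simp add: fpair_monom cheb_mom_def poly_monom)
  have "?F q = 0" by (rule lin_ext[of ?F, OF add sm mon])
  then show ?thesis by simp
qed

lemma p_decomp:
  fixes p :: "real poly"
  shows "poly p x = coeff p 0 + x * (coeff p 1 + x * poly (poly_shift 2 p) x)"
proof -
  have e1: "p = pCons (coeff p 0) (S1 p)" by (rule poly_eqI) (simp add: coeff_pCons coeff_poly_shift split: nat.split)
  have e2: "S1 p = pCons (coeff p 1) (poly_shift 2 p)"
    by (rule poly_eqI) (simp add: coeff_pCons coeff_poly_shift split: nat.split)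
  have "poly p x = poly (pCons (coeff p 0) (pCons (coeff p 1) (poly_shift 2 p))) x"
    using e1 e2 by metis
  then show ?thesis by simp
qed

lemma part1: "fpair lcf p = - (1 / pi\<^sup>2) * integral {-1..1}
                (\<lambda>x. (poly p x - poly p 0 - poly (pderiv p) 0 * x) / x\<^sup>2 * sqrt (1 - x\<^sup>2))
            + (2 / pi) * poly p 0"
proof -
  have sp: "integral {-1..1} (\<lambda>x. (poly p x - poly p 0 - poly (pderiv p) 0 * x) / x\<^sup>2 * sqrt (1 - x\<^sup>2))
      = integral {-1..1} (\<lambda>x. poly (poly_shift 2 p) x * sqrt (1 - x\<^sup>2))"
  proof (rule integral_spike[of "{0}"])
    show "negligible {0::real}" by simp
    fix x :: real assume "x \<in> {-1..1} - {0}"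
    then have x0: "x \<noteq> 0" by auto
    have d: "poly (pderiv p) 0 = coeff p 1" by (simp add: poly_0_coeff_0 coeff_pderiv)
    have "poly p x - poly p 0 - poly (pderiv p) 0 * x = x\<^sup>2 * poly (poly_shift 2 p) x"
      unfolding d by (subst p_decomp) (simp add: poly_0_coeff_0 power2_eq_square algebra_simps)
    then show "poly (poly_shift 2 p) x * sqrt (1 - x\<^sup>2) = (poly p x - poly p 0 - poly (pderiv p) 0 * x) / x\<^sup>2 * sqrt (1 - x\<^sup>2)"
      using x0 by simp
  qed
  show ?thesis unfolding sp int_poly L_formula by (simp add: poly_0_coeff_0)
qed

lemma stieltjes_id: "stieltjes lcf =
           fps_const (2 / pi) * fps_X - fps_const (1 / pi\<^sup>2) * fps_X ^ 2 * stieltjes cheb_mom"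
proof (rule fps_ext)
  fix k
  have r: "fps_nth (fps_const (2 / pi) * fps_X - fps_const (1 / pi\<^sup>2) * fps_X ^ 2 * stieltjes cheb_mom) k
      = (2/pi) * (if k = 1 then 1 else 0) - (1/pi^2) * (if k < 2 then 0 else fps_nth (stieltjes cheb_mom) (k - 2))"
    by (simp add: mult.assoc fps_X_power_mult_nth)
  show "fps_nth (stieltjes lcf) k = fps_nth (fps_const (2 / pi) * fps_X - fps_const (1 / pi\<^sup>2) * fps_X ^ 2 * stieltjes cheb_mom) k"
    unfolding r
    by (cases "k \<le> 2") (auto simp: stieltjes_def lcf_def le_Suc_eq numeral_2_eq_2)
qed


theorem mainTheorem15:
  shows "(\<forall>p :: real poly. fpair (inv_mom cheb_mom) p =
            - (1 / pi\<^sup>2) * integral {-1..1}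
                (\<lambda>x. (poly p x - poly p 0 - poly (pderiv p) 0 * x) / x\<^sup>2 * sqrt (1 - x\<^sup>2))
            + (2 / pi) * poly p 0)
       \<and> quasi_definite (inv_mom cheb_mom)
       \<and> is_MOPS (inv_mom cheb_mom) chebU_inv
       \<and> [:0, 1:] * chebU_inv 0 = chebU_inv 1
       \<and> (\<forall>n\<ge>1. [:0, 1:] * chebU_inv n = chebU_inv (Suc n) + Polynomial.smult (a_m n) (chebU_inv (n - 1)))
       \<and> stieltjes (inv_mom cheb_mom) =
           fps_const (2 / pi) * fps_X - fps_const (1 / pi\<^sup>2) * fps_X ^ 2 * stieltjes cheb_mom"
proof -
  have i: "inv_mom cheb_mom = lcf" by (rule inv_eq)
  have c1: "\<forall>p :: real poly. fpair lcf p =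
            - (1 / pi\<^sup>2) * integral {-1..1}
                (\<lambda>x. (poly p x - poly p 0 - poly (pderiv p) 0 * x) / x\<^sup>2 * sqrt (1 - x\<^sup>2))
            + (2 / pi) * poly p 0" using part1 by blast
  have c3: "is_MOPS lcf chebU_inv"
    unfolding is_MOPS_def using P_deg orth norm_nz by auto
  have c4: "[:0, 1:] * chebU_inv 0 = chebU_inv 1" using P1' unfolding XX_def .
  have c5: "\<forall>n\<ge>1. [:0, 1:] * chebU_inv n = chebU_inv (Suc n) + Polynomial.smult (a_m n) (chebU_inv (n - 1))"
    using rec_P unfolding XX_def by blast
  show ?thesis unfolding i using c1 qd c3 c4 c5 stieltjes_id by blast
qed

end
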